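(* Under the assumptions and tuning parameters of Theorem 1 (see context), for every epoch $m=1,\dots,M$ of the VRPG algorithm, with $$\hat x_m:=\arg\min_x\Big\{f(x)+\big\langle x,\bar\nabla f_m(\bar x_m)-\nabla f(\bar x_m)\big\rangle+R(x)\Big\},$$ one has $$\mathbb{E}\|\bar x_{m+1}-\hat x_m\|_2^2\le\frac{\mathbb{E}\|\bar x_m-\hat x_m\|_2^2}{20}.$$
   Context: Let $z\sim\mathbb{P}_0$ be a random element of a measurable space $\mathcal{Z}$, let $f:\mathbb{R}^d\times\mathcal{Z}\to\mathbb{R}$, and write $f(x):=\mathbb{E}_{z\sim\mathbb{P}_0}f(x,z)$. Assumptions: (A1) $f(\cdot)$ is $\mu$-strongly convex and $L$-smooth for some $0<\mu\le L<\infty$. (A2) $R:\mathbb{R}^d\to\mathbb{R}\cup\{+\infty\}$ is proper, convex, lower semicontinuous. (A3) For every $z$, $x\mapsto f(x,z)$ is continuously differentiable with $\|\nabla f(x,z)-\nabla f(y,z)\|_2\le L\|x-y\|_2$; $\mathbb{E}\|\nabla f(x,z)\|_2^2<\infty$ and $\mathbb{E}\nabla f(x,z)=\nabla f(x)$ for all $x$. VRPG algorithm with parameters $M,K,T,\lambda$, deterministic initial point $\bar x_1$, using i.i.d. samples $z_1,z_2,\dots\sim\mathbb{P}_0$: for $m=1,\dots,M$, set $j_m=(m-1)(T+K)$, $\bar\nabla f_m(x):=\frac1T\sum_{i=1}^T\nabla f(x,z_{j_m+i})$, and for $k=1,\dots,K$, $G_{k,m}(x):=\nabla f(x,z_{j_m+T+k})+\bar\nabla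 f_m(\bar x_m)-\nabla f(\bar x_m,z_{j_m+T+k})$. Set $x_0=\bar x_m$, $x_k=\arg\min_y\{\tfrac12\|y-(x_{k-1}-\lambda G_{k,m}(x_{k-1}))\|_2^2+\lambda R(y)\}$ for $k=1,\dots,K$, and $\bar x_{m+1}=x_K$. Tuning parameters: $\lambda=\frac{\mu}{6\cdot 8^2 L^2}$, $K=\frac{\log 120}{\log(1/(1-\mu^2/(6\cdot 8^2 L^2)))}$ (assumed a positive integer), $T$ a positive integer. *)

theory Defs
  imports "HOL-Probability.Probability"
begin

definition strongly_convex :: "real \<Rightarrow> ('v::real_normed_vector \<Rightarrow> real) \<Rightarrow> bool" where
  "strongly_convex \<mu> F \<longleftrightarrow>
     (\<forall>x y. \<forall>t\<in>{0..1}. F ((1 - t) *\<^sub>R x + t *\<^sub>R y)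
        \<le> (1 - t) * F x + t * F y - \<mu> / 2 * t * (1 - t) * (norm (x - y))\<^sup>2)"

definition proper_fun :: "('v \<Rightarrow> ereal) \<Rightarrow> bool" where
  "proper_fun R \<longleftrightarrow> (\<forall>x. R x \<noteq> -\<infinity>) \<and> (\<exists>x. R x < \<infinity>)"

definition convex_ereal_fun :: "('v::real_vector \<Rightarrow> ereal) \<Rightarrow> bool" where
  "convex_ereal_fun R \<longleftrightarrow>
     (\<forall>x y. \<forall>t\<in>{0..1}. R ((1 - t) *\<^sub>R x + t *\<^sub>R y) \<le> ereal (1 - t) * R x + ereal t * R y)"

definition lsc_fun :: "('v::topological_space \<Rightarrow> ereal) \<Rightarrow> bool" where
  "lsc_fun R \<longleftrightarrow> (\<forall>c. closed {x. R x \<le> c})"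

definition argmin_e :: "('v \<Rightarrow> ereal) \<Rightarrow> 'v" where
  "argmin_e \<Phi> = (SOME y. \<forall>u. \<Phi> y \<le> \<Phi> u)"

definition prox :: "real \<Rightarrow> ('v::real_normed_vector \<Rightarrow> ereal) \<Rightarrow> 'v \<Rightarrow> 'v" where
  "prox lam R v = argmin_e (\<lambda>y. ereal ((norm (y - v))\<^sup>2 / 2) + ereal lam * R y)"

(* VRPG. Samples: z_j = \<omega> j for j = 1,2,...; gf x z = gradient of f(.,z) at x *)
definition vrpg_j :: "nat \<Rightarrow> nat \<Rightarrow> nat \<Rightarrow> nat" where
  "vrpg_j T K m = (m - 1) * (T + K)"

definition vrpg_gbar :: "('v::real_vector \<Rightarrow> 'z \<Rightarrow> 'v) \<Rightarrow> nat \<Rightarrow> nat \<Rightarrow> nat \<Rightarrow> (nat \<Rightarrow> 'z) \<Rightarrow> 'v \<Rightarrow> 'v" where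
  "vrpg_gbar gf T K m \<omega> x = (1 / real T) *\<^sub>R (\<Sum>i=1..T. gf x (\<omega> (vrpg_j T K m + i)))"

definition vrpg_G :: "('v::real_vector \<Rightarrow> 'z \<Rightarrow> 'v) \<Rightarrow> nat \<Rightarrow> nat \<Rightarrow> nat \<Rightarrow> nat \<Rightarrow> (nat \<Rightarrow> 'z) \<Rightarrow> 'v \<Rightarrow> 'v \<Rightarrow> 'v" where
  "vrpg_G gf T K m k \<omega> xb x =
     gf x (\<omega> (vrpg_j T K m + T + k)) + vrpg_gbar gf T K m \<omega> xb - gf xb (\<omega> (vrpg_j T K m + T + k))"

fun vrpg_inner :: "('v::real_normed_vector \<Rightarrow> 'z \<Rightarrow> 'v) \<Rightarrow> ('v \<Rightarrow> ereal) \<Rightarrow> real \<Rightarrow> nat \<Rightarrow> nat \<Rightarrow> nat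
    \<Rightarrow> (nat \<Rightarrow> 'z) \<Rightarrow> 'v \<Rightarrow> nat \<Rightarrow> 'v" where
  "vrpg_inner gf R lam T K m \<omega> xb 0 = xb"
| "vrpg_inner gf R lam T K m \<omega> xb (Suc k) =
     (let y = vrpg_inner gf R lam T K m \<omega> xb k
      in prox lam R (y - lam *\<^sub>R vrpg_G gf T K m (Suc k) \<omega> xb y))"

(* epoch points \<bar>x_m, m \<ge> 1; \<bar>x_1 = x1 (index 0 is a dummy, also x1) *)
fun vrpg_xbar :: "('v::real_normed_vector \<Rightarrow> 'z \<Rightarrow> 'v) \<Rightarrow> ('v \<Rightarrow> ereal) \<Rightarrow> real \<Rightarrow> nat \<Rightarrow> nat
    \<Rightarrow> 'v \<Rightarrow> (nat \<Rightarrow> 'z) \<Rightarrow> nat \<Rightarrow> 'v" where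
  "vrpg_xbar gf R lam T K x1 \<omega> 0 = x1"
| "vrpg_xbar gf R lam T K x1 \<omega> (Suc m) =
     (if m = 0 then x1
      else vrpg_inner gf R lam T K m \<omega> (vrpg_xbar gf R lam T K x1 \<omega> m) K)"

end

theory Submission
  imports Defs
begin



lemma le_small:
  fixes a b c :: real
  assumes "\<And>t. 0 < t \<Longrightarrow> t \<le> 1 \<Longrightarrow> a \<le> b + t * c"
  shows "a \<le> b"
proof (rule ccontr)
  assume "\<not> a \<le> b"
  then have ab: "a > b" by simp
  show False
  proof (cases "c \<le> 0")
    case True
    then show ?thesis using assms[of 1] ab by simp
  next
    case False
    define t where "t = min 1 ((a - b) / (2 * c))"
    have t: "0 < t" "t \<le> 1" using False ab by (auto simp: t_def)
    have "t * c \<le> (a - b) / (2 * c) * c" using False by (intro mult_right_mono) (auto simp: t_def)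
    also have "\<dots> = (a - b) / 2" using False by (simp add: field_simps)
    finally show False using assms[OF t] ab by (simp add: field_simps)
  qed
qed

lemma proper_finite:
  assumes "proper_fun Q" "Q x \<noteq> \<infinity>" obtains r where "Q x = ereal r"
  using assms unfolding proper_fun_def by (cases "Q x") auto

lemma R_lower:
  fixes Q :: "'v::euclidean_space \<Rightarrow> ereal"
  assumes pr: "proper_fun Q" and cv: "convex_ereal_fun Q" and ls: "lsc_fun Q"
  shows "\<exists>A. \<forall>y. ereal (- A - A * norm y) \<le> Q y"
proof -
  obtain x0 where x0: "Q x0 < \<infinity>" using pr unfolding proper_fun_def by blast
  then have "Q x0 \<noteq> \<infinity>" by simp
  then obtain r0 where r0: "Q x0 = ereal r0" using proper_finite[OF pr] by blast
  have "\<exists>n::nat. \<forall>y\<in>cball x0 1. ereal (- real n) < Q y"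
  proof (rule ccontr)
    assume "\<not> ?thesis"
    then have "\<forall>n. \<exists>y\<in>cball x0 1. Q y \<le> ereal (- real n)" using not_less by blast
    then obtain f where f: "\<And>n. f n \<in> cball x0 1" "\<And>n. Q (f n) \<le> ereal (- real n)" by metis
    obtain l r where l: "l \<in> cball x0 1" "strict_mono r" "(f \<circ> r) \<longlonglongrightarrow> l"
    proof -
      have "\<forall>n. f n \<in> cball x0 1" using f(1) by blast
      from seq_compactE[OF compact_imp_seq_compact[OF compact_cball] this] show ?thesis using that by blast
    qed
    have "Q l \<le> ereal (- real N)" for N
    proof -
      have "(\<lambda>n. (f \<circ> r) (n + N)) \<longlonglongrightarrow> l" using LIMSEQ_ignore_initial_segment[OF l(3)] .
      moreover have "(f \<circ> r) (n + N) \<in> {x. Q x \<le> ereal (- real N)}" for n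
      proof -
        have "N \<le> r (n + N)" using seq_suble[OF l(2), of "n+N"] by simp
        then have "ereal (- real (r (n + N))) \<le> ereal (- real N)" by simp
        from order_trans[OF f(2)[of "r (n+N)"] this] show ?thesis by simp
      qed
      moreover have "closed {x. Q x \<le> ereal (- real N)}" using ls unfolding lsc_fun_def by blast
      ultimately have "l \<in> {x. Q x \<le> ereal (- real N)}"
        using closed_sequentially[of "{x. Q x \<le> ereal (- real N)}" "\<lambda>n. (f \<circ> r) (n + N)" l] by blast
      then show ?thesis by simp
    qed
    moreover have "Q l \<noteq> - \<infinity>" using pr unfolding proper_fun_def by blast
    ultimately show False
    proof (cases "Q l")
      case (real ql)
      obtain N :: nat where "- ql < real N" using reals_Archimedean2 by blast
      then show False using \<open>\<And>N. Q l \<le> ereal (- real N)\<close>[of N] real by simp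
    next
      case PInf then show False using \<open>\<And>N. Q l \<le> ereal (- real N)\<close>[of 0] by simp
    next
      case MInf then show False using \<open>Q l \<noteq> - \<infinity>\<close> by simp
    qed
  qed
  then obtain n :: nat where n: "\<And>y. y \<in> cball x0 1 \<Longrightarrow> ereal (- real n) < Q y" by blast
  define A where "A = (n + \<bar>r0\<bar>) * (1 + norm x0) + n + \<bar>r0\<bar>"
  have A1: "A \<ge> n" "A \<ge> n + \<bar>r0\<bar>" "A \<ge> (n + \<bar>r0\<bar>) * norm x0"
    unfolding A_def by (auto simp: algebra_simps)
  have "ereal (- A - A * norm y) \<le> Q y" for y
  proof (cases "norm (y - x0) \<le> 1")
    case True
    then have "y \<in> cball x0 1" by (simp add: dist_norm norm_minus_commute)
    moreover have "- A - A * norm y \<le> - real n"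
    proof -
      have "0 \<le> A" using A1(1) of_nat_0_le_iff order_trans by blast
      then have "0 \<le> A * norm y" by simp
      then show ?thesis using A1(1) by linarith
    qed
    ultimately show ?thesis using order_trans[OF _ less_imp_le[OF n[of y]], of "ereal (- A - A * norm y)"] by simp
  next
    case False
    show ?thesis
    proof (cases "Q y = \<infinity>")
      case True then show ?thesis by simp
    next
      case fin: False
      then obtain qy where qy: "Q y = ereal qy" using proper_finite[OF pr fin] by blast
      define D where "D = norm (y - x0)"
      have D1: "D > 1" using False D_def by simp
      define t where "t = 1 / D"
      have t: "0 < t" "t < 1" using D1 by (auto simp: t_def)
      define z where "z = (1 - t) *\<^sub>R x0 + t *\<^sub>R y"
      have "z - x0 = t *\<^sub>R (y - x0)" by (simp add: z_def algebra_simps)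
      moreover have "y \<noteq> x0" using D1 D_def by force
      ultimately have "norm (z - x0) = 1" by (simp add: t_def D_def)
      then have "z \<in> cball x0 1" by (simp add: dist_norm norm_minus_commute)
      then have "ereal (- real n) < Q z" by (rule n)
      also have "Q z \<le> ereal (1 - t) * Q x0 + ereal t * Q y"
      proof -
        have "t \<in> {0..1}" using t by simp
        then show ?thesis using cv unfolding convex_ereal_fun_def z_def by blast
      qed
      also have "\<dots> = ereal ((1 - t) * r0 + t * qy)" by (simp add: r0 qy)
      finally have ineq: "- real n < (1 - t) * r0 + t * qy" by simp
      then have "- real n * D < ((1 - t) * r0 + t * qy) * D" using D1 by (intro mult_strict_right_mono) simp_all
      also have "\<dots> = (D - 1) * r0 + qy" using D1 by (simp add: t_def field_simps)
      finally have i2: "- real n * D - (D - 1) * r0 < qy" by simp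
      have "(D - 1) * r0 \<le> (D - 1) * \<bar>r0\<bar>" using D1 by (intro mult_left_mono) simp_all
      also have "\<dots> \<le> D * \<bar>r0\<bar>" by (simp add: mult_right_mono)
      finally have "(D - 1) * r0 \<le> D * \<bar>r0\<bar>" .
      then have i3: "- (n + \<bar>r0\<bar>) * D \<le> qy" using i2 by (simp add: algebra_simps)
      have "D \<le> norm y + norm x0" unfolding D_def using norm_triangle_ineq4 by blast
      then have "(n + \<bar>r0\<bar>) * D \<le> (n + \<bar>r0\<bar>) * (norm y + norm x0)" by (intro mult_left_mono) simp_all
      moreover have "(n + \<bar>r0\<bar>) * (norm y + norm x0) \<le> A + A * norm y"
      proof -
        have "(n + \<bar>r0\<bar>) * norm y \<le> A * norm y" using A1(2) by (simp add: mult_right_mono)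
        then show ?thesis using A1(3) by (simp add: distrib_left)
      qed
      ultimately have "- A - A * norm y \<le> qy" using i3 by linarith
      then show ?thesis by (simp add: qy)
    qed
  qed
  then show ?thesis by blast
qed




lemma exists_min:
  fixes G :: "'v::euclidean_space \<Rightarrow> real" and Q :: "'v \<Rightarrow> ereal"
  assumes Gc: "continuous_on UNIV G" and c: "c > 0"
    and Glow: "\<And>y. c * (norm y)\<^sup>2 - b * norm y - a \<le> G y"
    and pr: "proper_fun Q" and cv: "convex_ereal_fun Q" and ls: "lsc_fun Q"
  shows "\<exists>p. \<forall>u. ereal (G p) + Q p \<le> ereal (G u) + Q u"
proof -
  obtain A where A: "\<And>y. ereal (- A - A * norm y) \<le> Q y" using R_lower[OF pr cv ls] by blast
  obtain x0 where "Q x0 < \<infinity>" using pr unfolding proper_fun_def by blast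
  then have "Q x0 \<noteq> \<infinity>" by simp
  then obtain q0 where q0: "Q x0 = ereal q0" using proper_finite[OF pr] by blast
  define \<Psi> where "\<Psi> y = ereal (G y) + Q y" for y
  define B where "B = b + A"
  define C0 where "C0 = a + A"
  have low: "ereal (c * (norm y)\<^sup>2 - B * norm y - C0) \<le> \<Psi> y" for y
  proof -
    have "ereal (c * (norm y)\<^sup>2 - B * norm y - C0) = ereal (c * (norm y)\<^sup>2 - b * norm y - a) + ereal (- A - A * norm y)"
      by (simp add: B_def C0_def algebra_simps)
    also have "\<dots> \<le> \<Psi> y" unfolding \<Psi>_def using Glow[of y] A[of y] by (intro add_mono) simp_all
    finally show ?thesis .
  qed
  define Lm where "Lm = - (B\<^sup>2 / (4 * c)) - C0"
  have Lm: "ereal Lm \<le> \<Psi> y" for y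
  proof -
    have "0 \<le> (2 * c * norm y - B)\<^sup>2" by simp
    then have "- (B\<^sup>2 / (4 * c)) \<le> c * (norm y)\<^sup>2 - B * norm y" using c
      by (simp add: field_simps power2_eq_square)
    then have "ereal Lm \<le> ereal (c * (norm y)\<^sup>2 - B * norm y - C0)" by (simp add: Lm_def)
    then show ?thesis using low[of y] by (rule order_trans)
  qed
  define V where "V = G x0 + q0 + 1"
  define \<rho> where "\<rho> = max 1 ((\<bar>V + C0\<bar> + \<bar>B\<bar>) / c)"
  have bnd: "norm y \<le> \<rho>" if "\<Psi> y \<le> ereal V" for y
  proof (rule ccontr)
    assume "\<not> norm y \<le> \<rho>"
    then have n1: "norm y > 1" and n2: "norm y > (\<bar>V + C0\<bar> + \<bar>B\<bar>) / c" by (auto simp: \<rho>_def)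
    have "c * (norm y)\<^sup>2 - B * norm y - C0 \<le> V" using order_trans[OF low that] by simp
    then have "c * norm y * norm y \<le> V + C0 + B * norm y" by (simp add: power2_eq_square)
    also have "\<dots> \<le> (\<bar>V + C0\<bar> + \<bar>B\<bar>) * norm y"
    proof -
      have "V + C0 \<le> \<bar>V + C0\<bar> * norm y" using n1
        by (smt (verit) abs_ge_self abs_ge_zero mult_le_cancel_left1)
      moreover have "B * norm y \<le> \<bar>B\<bar> * norm y" by (simp add: mult_right_mono)
      ultimately show ?thesis by (simp add: distrib_right)
    qed
    finally have "(c * norm y) * norm y \<le> (\<bar>V + C0\<bar> + \<bar>B\<bar>) * norm y" .
    from mult_right_le_imp_le[OF this] n1 have "c * norm y \<le> \<bar>V + C0\<bar> + \<bar>B\<bar>" by force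
    then show False using n2 c by (simp add: field_simps)
  qed
  define m where "m = Inf (range \<Psi>)"
  have mle: "m \<le> \<Psi> u" for u unfolding m_def by (rule Inf_lower) simp
  have mge: "ereal Lm \<le> m" unfolding m_def
  proof (rule Inf_greatest)
    fix x assume "x \<in> range \<Psi>"
    then obtain y where "x = \<Psi> y" by blast
    then show "ereal Lm \<le> x" using Lm[of y] by simp
  qed
  have mub: "m \<le> ereal (G x0 + q0)" using mle[of x0] by (simp add: \<Psi>_def q0)
  obtain mr where mr: "m = ereal mr" and mrle: "mr \<le> G x0 + q0"
  proof (cases m)
    case (real r) then show ?thesis using that mub by simp
  next
    case PInf then show ?thesis using mub by simp
  next
    case MInf then show ?thesis using mge by simp
  qed
  have "\<exists>y. \<Psi> y < ereal (mr + 1 / Suc n)" for n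
  proof -
    have "m < ereal (mr + 1 / Suc n)" using mr by simp
    then show ?thesis unfolding m_def Inf_less_iff by blast
  qed
  then obtain ys where ys: "\<And>n. \<Psi> (ys n) < ereal (mr + 1 / Suc n)" by metis
  have "norm (ys n) \<le> \<rho>" for n
  proof (rule bnd)
    have "1 / real (Suc n) \<le> 1" by simp
    then have "mr + 1 / Suc n \<le> V" using mrle unfolding V_def by linarith
    then have "ereal (mr + 1 / Suc n) \<le> ereal V" by simp
    then show "\<Psi> (ys n) \<le> ereal V" using less_imp_le[OF ys[of n]] by (rule order_trans[rotated])
  qed
  then have "bounded (range ys)" by (auto simp: bounded_iff)
  from bounded_imp_convergent_subsequence[OF this] obtain p r where r: "strict_mono r" "(ys \<circ> r) \<longlonglongrightarrow> p"
    by blast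
  have Gconv: "(\<lambda>n. G ((ys \<circ> r) n)) \<longlonglongrightarrow> G p"
    using continuous_on_tendsto_compose[OF Gc r(2)] by simp
  have key: "\<Psi> p \<le> ereal (mr + 2 * e)" if e: "e > 0" for e
  proof -
    obtain N0 :: nat where N0: "1 / Suc N0 < e"
      using reals_Archimedean[OF e] by (auto simp: inverse_eq_divide)
    have "\<forall>\<^sub>F n in sequentially. G p - e < G ((ys \<circ> r) n)"
      using order_tendstoD(1)[OF Gconv] e by simp
    then obtain N1 where N1: "\<And>n. n \<ge> N1 \<Longrightarrow> G p - e < G ((ys \<circ> r) n)"
      unfolding eventually_sequentially by blast
    define N where "N = max N0 N1"
    define c0 where "c0 = mr + 2 * e - G p"
    have inS: "(ys \<circ> r) (n + N) \<in> {x. Q x \<le> ereal c0}" for n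
    proof -
      let ?y = "ys (r (n + N))"
      have "N0 \<le> r (n + N)" using seq_suble[OF r(1), of "n + N"] by (simp add: N_def)
      then have "1 / real (Suc (r (n + N))) \<le> 1 / Suc N0" by (simp add: frac_le)
      then have "mr + 1 / real (Suc (r (n + N))) \<le> mr + e" using N0 by linarith
      then have "ereal (mr + 1 / real (Suc (r (n + N)))) \<le> ereal (mr + e)" by simp
      then have psi: "\<Psi> ?y < ereal (mr + e)" using ys[of "r (n + N)"] by (rule order.strict_trans2[rotated])
      have gy: "G p - e < G ?y" using N1[of "n + N"] by (simp add: N_def)
      have "Q ?y \<noteq> \<infinity>" using psi by (auto simp: \<Psi>_def)
      then obtain qy where qy: "Q ?y = ereal qy" using proper_finite[OF pr] by blast
      have "G ?y + qy < mr + e" using psi by (simp add: \<Psi>_def qy)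
      then have "qy \<le> c0" using gy by (simp add: c0_def)
      then show ?thesis by (simp add: qy)
    qed
    have "closed {x. Q x \<le> ereal c0}" using ls unfolding lsc_fun_def by blast
    moreover have "(\<lambda>n. (ys \<circ> r) (n + N)) \<longlonglongrightarrow> p" using LIMSEQ_ignore_initial_segment[OF r(2)] .
    ultimately have "p \<in> {x. Q x \<le> ereal c0}"
      using closed_sequentially[of _ "\<lambda>n. (ys \<circ> r) (n + N)" p] inS by blast
    then have "Q p \<le> ereal c0" by simp
    then have "\<Psi> p \<le> ereal (G p) + ereal c0" unfolding \<Psi>_def by (intro add_mono) simp_all
    then show ?thesis by (simp add: c0_def)
  qed
  have "\<Psi> p \<le> m"
  proof -
    have "\<Psi> p \<noteq> \<infinity>" using key[of 1] by auto
    moreover have "\<Psi> p \<noteq> - \<infinity>" using Lm[of p] by auto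
    ultimately obtain pr' where pr': "\<Psi> p = ereal pr'" by (cases "\<Psi> p") auto
    have "pr' \<le> mr"
    proof (rule field_le_epsilon)
      fix e :: real assume "0 < e"
      then have "pr' \<le> mr + 2 * (e / 2)" using key[of "e/2"] pr' by simp
      then show "pr' \<le> mr + e" by simp
    qed
    then show ?thesis using pr' mr by simp
  qed
  then show ?thesis using mle unfolding \<Psi>_def by (meson order_trans)
qed




lemma growth:
  fixes G :: "'v::euclidean_space \<Rightarrow> real" and Q :: "'v \<Rightarrow> ereal"
  assumes sc: "strongly_convex c G" and pr: "proper_fun Q" and cv: "convex_ereal_fun Q"
    and min: "\<And>u. ereal (G p) + Q p \<le> ereal (G u) + Q u"
  shows "Q p \<noteq> \<infinity>" and "ereal (G p) + Q p + ereal (c / 2 * (norm (y - p))\<^sup>2) \<le> ereal (G y) + Q y"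
proof -
  obtain x0 where "Q x0 < \<infinity>" using pr unfolding proper_fun_def by blast
  then have "Q x0 \<noteq> \<infinity>" by simp
  then obtain q0 where q0: "Q x0 = ereal q0" using proper_finite[OF pr] by blast
  show pfin: "Q p \<noteq> \<infinity>"
  proof
    assume "Q p = \<infinity>"
    then show False using min[of x0] q0 by simp
  qed
  then obtain qp where qp: "Q p = ereal qp" using proper_finite[OF pr] by blast
  show "ereal (G p) + Q p + ereal (c / 2 * (norm (y - p))\<^sup>2) \<le> ereal (G y) + Q y"
  proof (cases "Q y = \<infinity>")
    case True then show ?thesis by (simp add: qp)
  next
    case False
    then obtain qy where qy: "Q y = ereal qy" using proper_finite[OF pr] by blast
    define d where "d = (norm (y - p))\<^sup>2"
    have "G p + qp + c / 2 * d \<le> G y + qy"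
    proof (rule le_small[where c = "c / 2 * d"])
      fix t :: real assume t: "0 < t" "t \<le> 1"
      define z where "z = (1 - t) *\<^sub>R p + t *\<^sub>R y"
      have t01: "t \<in> {0..1}" using t by simp
      have Qz: "Q z \<le> ereal ((1 - t) * qp + t * qy)"
      proof -
        have "Q z \<le> ereal (1 - t) * Q p + ereal t * Q y" using cv t01 unfolding convex_ereal_fun_def z_def by blast
        then show ?thesis by (simp add: qp qy)
      qed
      have "Q z \<noteq> \<infinity>" using Qz by auto
      then obtain qz where qz: "Q z = ereal qz" using proper_finite[OF pr] by blast
      have Gz: "G z \<le> (1 - t) * G p + t * G y - c / 2 * t * (1 - t) * d"
        using sc t01 unfolding strongly_convex_def z_def d_def by (simp add: norm_minus_commute)
      have "G p + qp \<le> G z + qz" using min[of z] by (simp add: qp qz)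
      also have "\<dots> \<le> (1 - t) * G p + t * G y - c / 2 * t * (1 - t) * d + ((1 - t) * qp + t * qy)"
        using Gz Qz qz by simp
      finally have "t * (G p + qp) \<le> t * (G y + qy - c / 2 * (1 - t) * d)" by (simp add: algebra_simps)
      then have "G p + qp \<le> G y + qy - c / 2 * (1 - t) * d" using t by simp
      moreover have "c / 2 * (1 - t) * d = c / 2 * d - t * (c / 2 * d)" by (simp add: field_simps)
      ultimately show "G p + qp + c / 2 * d \<le> G y + qy + t * (c / 2 * d)" by linarith
    qed
    then show ?thesis by (simp add: qp qy d_def)
  qed
qed

lemma two_min:
  fixes G1 G2 :: "'v::euclidean_space \<Rightarrow> real" and Q :: "'v \<Rightarrow> ereal"
  assumes sc1: "strongly_convex c G1" and sc2: "strongly_convex c G2"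
    and pr: "proper_fun Q" and cv: "convex_ereal_fun Q"
    and min1: "\<And>u. ereal (G1 p1) + Q p1 \<le> ereal (G1 u) + Q u"
    and min2: "\<And>u. ereal (G2 p2) + Q p2 \<le> ereal (G2 u) + Q u"
  shows "c * (norm (p1 - p2))\<^sup>2 \<le> (G1 p2 - G2 p2) - (G1 p1 - G2 p1)"
proof -
  obtain q1 where q1: "Q p1 = ereal q1" using growth(1)[OF sc1 pr cv min1] proper_finite[OF pr] by blast
  obtain q2 where q2: "Q p2 = ereal q2" using growth(1)[OF sc2 pr cv min2] proper_finite[OF pr] by blast
  have a: "G1 p1 + q1 + c / 2 * (norm (p2 - p1))\<^sup>2 \<le> G1 p2 + q2"
    using growth(2)[OF sc1 pr cv min1, of p2] by (simp add: q1 q2)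
  have b: "G2 p2 + q2 + c / 2 * (norm (p1 - p2))\<^sup>2 \<le> G2 p1 + q1"
    using growth(2)[OF sc2 pr cv min2, of p1] by (simp add: q1 q2)
  show ?thesis using a b by (simp add: norm_minus_commute)
qed

lemma scale_props:
  fixes R :: "'v::euclidean_space \<Rightarrow> ereal"
  assumes lam: "lam > 0" and pr: "proper_fun R" and cv: "convex_ereal_fun R" and ls: "lsc_fun R"
  shows "proper_fun (\<lambda>x. ereal lam * R x)" "convex_ereal_fun (\<lambda>x. ereal lam * R x)"
    "lsc_fun (\<lambda>x. ereal lam * R x)"
proof -
  have fin: "R x = \<infinity> \<or> (\<exists>r. R x = ereal r)" for x
    using pr unfolding proper_fun_def by (cases "R x") auto
  show "proper_fun (\<lambda>x. ereal lam * R x)"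
    unfolding proper_fun_def
  proof safe
    fix x assume "ereal lam * R x = - \<infinity>"
    then show False using fin[of x] lam by auto
  next
    obtain x where "R x < \<infinity>" using pr unfolding proper_fun_def by blast
    then obtain r where "R x = ereal r" using fin[of x] by auto
    then show "\<exists>x. ereal lam * R x < \<infinity>" by (intro exI[of _ x]) simp
  qed
  show "convex_ereal_fun (\<lambda>x. ereal lam * R x)"
    unfolding convex_ereal_fun_def
  proof (intro allI ballI)
    fix x y t assume t: "(t::real) \<in> {0..1}"
    have c: "R ((1 - t) *\<^sub>R x + t *\<^sub>R y) \<le> ereal (1 - t) * R x + ereal t * R y"
      using cv t unfolding convex_ereal_fun_def by blast
    have "ereal lam * R ((1 - t) *\<^sub>R x + t *\<^sub>R y) \<le> ereal lam * (ereal (1 - t) * R x + ereal t * R y)"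
      using c lam by (intro ereal_mult_left_mono) simp_all
    also have "\<dots> = ereal (1 - t) * (ereal lam * R x) + ereal t * (ereal lam * R y)"
    proof -
      have "ereal lam * (ereal (1 - t) * R x) = ereal (1 - t) * (ereal lam * R x)"
        by (simp add: ac_simps)
      moreover have "ereal lam * (ereal t * R y) = ereal t * (ereal lam * R y)"
        by (simp add: ac_simps)
      moreover have "ereal lam * (ereal (1 - t) * R x + ereal t * R y) = ereal lam * (ereal (1 - t) * R x) + ereal lam * (ereal t * R y)"
      proof (rule ereal_distrib_left)
        have "ereal (1 - t) * R x \<noteq> - \<infinity>" using fin[of x] t by (cases "t = 1") auto
        moreover have "ereal t * R y \<noteq> - \<infinity>" using fin[of y] t by (cases "t = 0") auto
        ultimately show "ereal (1 - t) * R x \<noteq> \<infinity> \<or> ereal t * R y \<noteq> - \<infinity>"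
          "ereal (1 - t) * R x \<noteq> - \<infinity> \<or> ereal t * R y \<noteq> \<infinity>" by auto
      qed simp
      ultimately show ?thesis by simp
    qed
    finally show "ereal lam * R ((1 - t) *\<^sub>R x + t *\<^sub>R y) \<le> ereal (1 - t) * (ereal lam * R x) + ereal t * (ereal lam * R y)" .
  qed
  show "lsc_fun (\<lambda>x. ereal lam * R x)"
    unfolding lsc_fun_def
  proof
    fix c :: ereal
    show "closed {x. ereal lam * R x \<le> c}"
    proof (cases c)
      case (real r)
      have "{x. ereal lam * R x \<le> c} = {x. R x \<le> ereal (r / lam)}"
      proof (intro Collect_cong iffI)
        fix x assume "ereal lam * R x \<le> c"
        then show "R x \<le> ereal (r / lam)" using fin[of x] lam real by (auto simp: field_simps)
      next
        fix x assume "R x \<le> ereal (r / lam)"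
        then show "ereal lam * R x \<le> c" using fin[of x] lam real by (auto simp: field_simps)
      qed
      then show ?thesis using ls unfolding lsc_fun_def by simp
    next
      case PInf then show ?thesis by simp
    next
      case MInf
      have "ereal lam * R x \<noteq> - \<infinity>" for x using fin[of x] lam by auto
      then have "{x. ereal lam * R x \<le> c} = {}" using MInf by simp
      then show ?thesis by simp
    qed
  qed
qed




lemma sq_id:
  fixes a b :: "'v::real_inner"
  shows "(norm ((1 - t) *\<^sub>R a + t *\<^sub>R b))\<^sup>2 = (1 - t) * (norm a)\<^sup>2 + t * (norm b)\<^sup>2 - t * (1 - t) * (norm (a - b))\<^sup>2"
  unfolding power2_norm_eq_inner
  by (simp add: inner_add_left inner_add_right inner_diff_left inner_diff_right inner_commute algebra_simps)

lemma sc_sq: "strongly_convex 1 (\<lambda>y::'v::real_inner. (norm (y - v))\<^sup>2 / 2)"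
  unfolding strongly_convex_def
proof (intro allI ballI)
  fix x y :: 'v and t :: real
  have e1: "(1 - t) *\<^sub>R x + t *\<^sub>R y - v = (1 - t) *\<^sub>R (x - v) + t *\<^sub>R (y - v)" by (simp add: algebra_simps)
  have e2: "x - y = (x - v) - (y - v)" by simp
  show "(norm ((1 - t) *\<^sub>R x + t *\<^sub>R y - v))\<^sup>2 / 2
         \<le> (1 - t) * ((norm (x - v))\<^sup>2 / 2) + t * ((norm (y - v))\<^sup>2 / 2) - 1 / 2 * t * (1 - t) * (norm (x - y))\<^sup>2"
    unfolding e1 sq_id e2 by (simp add: field_simps)
qed

lemma sc_lin:
  assumes "strongly_convex \<mu> F"
  shows "strongly_convex \<mu> (\<lambda>x. F x + x \<bullet> e)"
  using assms unfolding strongly_convex_def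
  by (simp add: inner_add_left algebra_simps)

lemma dir_deriv:
  fixes F :: "'v::real_inner \<Rightarrow> real"
  assumes "(F has_derivative (\<lambda>h. g \<bullet> h)) (at x)"
  shows "((\<lambda>t. (F (x + t *\<^sub>R d) - F x) / t) \<longlongrightarrow> g \<bullet> d) (at_right 0)"
proof -
  have l: "((\<lambda>t. x + t *\<^sub>R d) has_derivative (\<lambda>t. t *\<^sub>R d)) (at 0)"
    by (auto intro!: derivative_eq_intros)
  have a2: "(F has_derivative (\<lambda>h. g \<bullet> h)) (at (x + 0 *\<^sub>R d))" using assms by simp
  have "((\<lambda>t. F (x + t *\<^sub>R d)) has_derivative (\<lambda>t. g \<bullet> (t *\<^sub>R d))) (at 0)"
    using has_derivative_compose[OF l a2] by simp
  moreover have "(\<lambda>t. g \<bullet> (t *\<^sub>R d)) = (*) (g \<bullet> d)" by (auto simp: fun_eq_iff)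
  ultimately have "((\<lambda>t. F (x + t *\<^sub>R d)) has_field_derivative (g \<bullet> d)) (at 0)"
    by (simp add: has_field_derivative_def)
  then have "((\<lambda>y. (F (x + y *\<^sub>R d) - F x) / (y - 0)) \<longlongrightarrow> g \<bullet> d) (at 0)"
    unfolding has_field_derivative_iff by simp
  then have "((\<lambda>y. (F (x + y *\<^sub>R d) - F x) / y) \<longlongrightarrow> g \<bullet> d) (at 0)" by simp
  then show ?thesis by (rule tendsto_mono[OF at_le, rotated]) simp
qed

lemma first_order:
  fixes F :: "'v::real_inner \<Rightarrow> real"
  assumes sc: "strongly_convex \<mu> F" and der: "(F has_derivative (\<lambda>h. g \<bullet> h)) (at x)"
  shows "F x + g \<bullet> (y - x) + \<mu> / 2 * (norm (y - x))\<^sup>2 \<le> F y"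
proof -
  define d where "d = y - x"
  have f1: "((\<lambda>t. (F (x + t *\<^sub>R d) - F x) / t) \<longlongrightarrow> g \<bullet> d) (at_right 0)" by (rule dir_deriv[OF der])
  have f2: "((\<lambda>t. F y - F x - \<mu> / 2 * (1 - t) * (norm d)\<^sup>2) \<longlongrightarrow> F y - F x - \<mu> / 2 * (1 - 0) * (norm d)\<^sup>2) (at_right 0)"
    by (intro tendsto_intros)
  have ev: "\<forall>\<^sub>F t in at_right 0. (F (x + t *\<^sub>R d) - F x) / t \<le> F y - F x - \<mu> / 2 * (1 - t) * (norm d)\<^sup>2"
    using eventually_at_right_real[of 0 1, OF zero_less_one]
  proof (rule eventually_mono)
    fix t :: real assume t: "t \<in> {0<..<1}"
    have "x + t *\<^sub>R d = (1 - t) *\<^sub>R x + t *\<^sub>R y" by (simp add: d_def algebra_simps)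
    moreover have "t \<in> {0..1}" using t by simp
    ultimately have "F (x + t *\<^sub>R d) \<le> (1 - t) * F x + t * F y - \<mu> / 2 * t * (1 - t) * (norm (x - y))\<^sup>2"
      using sc unfolding strongly_convex_def by simp
    then have "F (x + t *\<^sub>R d) - F x \<le> t * (F y - F x - \<mu> / 2 * (1 - t) * (norm d)\<^sup>2)"
      by (simp add: d_def norm_minus_commute algebra_simps)
    then show "(F (x + t *\<^sub>R d) - F x) / t \<le> F y - F x - \<mu> / 2 * (1 - t) * (norm d)\<^sup>2"
      using t by (simp add: divide_le_eq mult.commute)
  qed
  have "g \<bullet> d \<le> F y - F x - \<mu> / 2 * (1 - 0) * (norm d)\<^sup>2"
    by (rule tendsto_le[OF trivial_limit_at_right_real f2 f1 ev])
  then show ?thesis by (simp add: d_def)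
qed

lemma strong_mono:
  fixes F :: "'v::real_inner \<Rightarrow> real"
  assumes sc: "strongly_convex \<mu> F" and der: "\<And>x. (F has_derivative (\<lambda>h. gradF x \<bullet> h)) (at x)"
  shows "\<mu> * (norm (a - b))\<^sup>2 \<le> (a - b) \<bullet> (gradF a - gradF b)"
proof -
  have 1: "F a + gradF a \<bullet> (b - a) + \<mu> / 2 * (norm (b - a))\<^sup>2 \<le> F b" by (rule first_order[OF sc der])
  have 2: "F b + gradF b \<bullet> (a - b) + \<mu> / 2 * (norm (a - b))\<^sup>2 \<le> F a" by (rule first_order[OF sc der])
  have "gradF a \<bullet> (b - a) + gradF b \<bullet> (a - b) = - ((a - b) \<bullet> (gradF a - gradF b))"
    by (simp add: inner_diff_left inner_diff_right inner_commute algebra_simps)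
  then show ?thesis using 1 2 by (simp add: norm_minus_commute)
qed




lemma prox_min:
  fixes R :: "'v::euclidean_space \<Rightarrow> ereal"
  assumes lam: "lam > 0" and pr: "proper_fun R" and cv: "convex_ereal_fun R" and ls: "lsc_fun R"
  shows "ereal ((norm (prox lam R v - v))\<^sup>2 / 2) + ereal lam * R (prox lam R v)
           \<le> ereal ((norm (u - v))\<^sup>2 / 2) + ereal lam * R u"
proof -
  have cont: "continuous_on UNIV (\<lambda>y::'v. (norm (y - v))\<^sup>2 / 2)" by (intro continuous_intros) auto
  have low: "1/2 * (norm y)\<^sup>2 - norm v * norm y - 0 \<le> (norm (y - v))\<^sup>2 / 2" for y :: 'v
  proof -
    have "(norm (y - v))\<^sup>2 = (norm y)\<^sup>2 - 2 * (y \<bullet> v) + (norm v)\<^sup>2"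
      unfolding power2_norm_eq_inner by (simp add: inner_diff_left inner_diff_right inner_commute)
    moreover have "y \<bullet> v \<le> norm y * norm v" by (rule norm_cauchy_schwarz)
    moreover have "0 \<le> (norm v)\<^sup>2" by simp
    moreover have "norm v * norm y = norm y * norm v" by (rule mult.commute)
    ultimately show ?thesis by linarith
  qed
  from exists_min[where c="1/2" and b="norm v" and a=0, OF cont _ low scale_props[OF lam pr cv ls]]
  have "\<exists>p. \<forall>u. ereal ((norm (p - v))\<^sup>2 / 2) + ereal lam * R p \<le> ereal ((norm (u - v))\<^sup>2 / 2) + ereal lam * R u"
    by simp
  from someI_ex[OF this] show ?thesis unfolding prox_def argmin_e_def by blast
qed

lemma sq_diff_id:
  fixes p q v w :: "'v::real_inner"
  shows "((norm (q - v))\<^sup>2 / 2 - (norm (q - w))\<^sup>2 / 2) - ((norm (p - v))\<^sup>2 / 2 - (norm (p - w))\<^sup>2 / 2)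
        = (q - p) \<bullet> (w - v)"
  unfolding power2_norm_eq_inner
  by (simp add: inner_diff_left inner_diff_right inner_commute field_simps)

lemma prox_nonexp:
  fixes R :: "'v::euclidean_space \<Rightarrow> ereal"
  assumes lam: "lam > 0" and pr: "proper_fun R" and cv: "convex_ereal_fun R" and ls: "lsc_fun R"
  shows "norm (prox lam R v - prox lam R w) \<le> norm (v - w)"
proof -
  let ?p = "prox lam R v" and ?q = "prox lam R w"
  note sp = scale_props[OF lam pr cv ls]
  have "1 * (norm (?p - ?q))\<^sup>2 \<le> ((norm (?q - v))\<^sup>2 / 2 - (norm (?q - w))\<^sup>2 / 2) - ((norm (?p - v))\<^sup>2 / 2 - (norm (?p - w))\<^sup>2 / 2)"
    by (rule two_min[OF sc_sq sc_sq sp(1) sp(2) prox_min[OF lam pr cv ls] prox_min[OF lam pr cv ls]])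
  also have "\<dots> = (?q - ?p) \<bullet> (w - v)" by (rule sq_diff_id)
  also have "\<dots> \<le> norm (?q - ?p) * norm (w - v)" by (rule norm_cauchy_schwarz)
  finally have "norm (?p - ?q) * norm (?p - ?q) \<le> norm (?p - ?q) * norm (v - w)"
    by (simp add: power2_eq_square norm_minus_commute)
  then show ?thesis
    by (cases "norm (?p - ?q) = 0") (simp_all add: mult_le_cancel_left_pos)
qed

lemma prox_fixed:
  fixes R :: "'v::euclidean_space \<Rightarrow> ereal"
  assumes lam: "lam > 0" and pr: "proper_fun R" and cv: "convex_ereal_fun R" and ls: "lsc_fun R"
    and VI: "\<And>y. ereal (- (w \<bullet> (y - p))) + R p \<le> R y"
  shows "prox lam R (p - lam *\<^sub>R w) = p"
proof -
  define v where "v = p - lam *\<^sub>R w"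
  note sp = scale_props[OF lam pr cv ls]
  obtain x0 where "R x0 < \<infinity>" using pr unfolding proper_fun_def by blast
  then have "R p \<noteq> \<infinity>" using VI[of x0] by auto
  then obtain rp where rp: "R p = ereal rp" using proper_finite[OF pr] by blast
  have pmin: "ereal ((norm (p - v))\<^sup>2 / 2) + ereal lam * R p \<le> ereal ((norm (u - v))\<^sup>2 / 2) + ereal lam * R u" for u
  proof (cases "R u = \<infinity>")
    case True then show ?thesis using lam by (simp add: rp)
  next
    case False
    then obtain ru where ru: "R u = ereal ru" using proper_finite[OF pr] by blast
    have vi: "- (w \<bullet> (u - p)) + rp \<le> ru" using VI[of u] by (simp add: rp ru)
    have pv: "p - v = lam *\<^sub>R w" by (simp add: v_def)
    have uv: "u - v = (u - p) + lam *\<^sub>R w" by (simp add: v_def)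
    have e1: "(norm (u - v))\<^sup>2 = (norm (u - p))\<^sup>2 + 2 * lam * ((u - p) \<bullet> w) + lam\<^sup>2 * (norm w)\<^sup>2"
      unfolding uv power2_norm_eq_inner
      by (simp add: inner_add_left inner_add_right inner_commute algebra_simps power2_eq_square)
    have e2: "(norm (p - v))\<^sup>2 = lam\<^sup>2 * (norm w)\<^sup>2"
      unfolding pv by (simp add: power_mult_distrib)
    have d: "((norm (u - v))\<^sup>2 / 2 + lam * ru) - ((norm (p - v))\<^sup>2 / 2 + lam * rp)
        = (norm (u - p))\<^sup>2 / 2 + lam * ((u - p) \<bullet> w + ru - rp)"
      unfolding e1 e2 by (simp add: field_simps)
    have "0 \<le> (u - p) \<bullet> w + ru - rp" using vi by (simp add: inner_commute)
    then have "0 \<le> (norm (u - p))\<^sup>2 / 2 + lam * ((u - p) \<bullet> w + ru - rp)" using lam by simp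
    then have "(norm (p - v))\<^sup>2 / 2 + lam * rp \<le> (norm (u - v))\<^sup>2 / 2 + lam * ru"
      using d by linarith
    then show ?thesis by (simp add: rp ru)
  qed
  have "1 * (norm (p - prox lam R v))\<^sup>2 \<le> ((norm (prox lam R v - v))\<^sup>2 / 2 - (norm (prox lam R v - v))\<^sup>2 / 2) - ((norm (p - v))\<^sup>2 / 2 - (norm (p - v))\<^sup>2 / 2)"
    by (rule two_min[OF sc_sq sc_sq sp(1) sp(2) pmin prox_min[OF lam pr cv ls]])
  then show ?thesis unfolding v_def[symmetric] by simp
qed




lemma xhat_min:
  fixes F :: "'v::euclidean_space \<Rightarrow> real" and R :: "'v \<Rightarrow> ereal"
  assumes der: "\<And>x. (F has_derivative (\<lambda>h. gradF x \<bullet> h)) (at x)" and sc: "strongly_convex \<mu> F" and mu: "\<mu> > 0"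
    and pr: "proper_fun R" and cv: "convex_ereal_fun R" and ls: "lsc_fun R"
  shows "ereal (F (argmin_e (\<lambda>x. ereal (F x + x \<bullet> e) + R x)) + argmin_e (\<lambda>x. ereal (F x + x \<bullet> e) + R x) \<bullet> e)
           + R (argmin_e (\<lambda>x. ereal (F x + x \<bullet> e) + R x)) \<le> ereal (F u + u \<bullet> e) + R u"
proof -
  have cF: "continuous_on UNIV F"
    using der has_derivative_continuous continuous_at_imp_continuous_on by blast
  have cont: "continuous_on UNIV (\<lambda>x. F x + x \<bullet> e)" by (intro continuous_intros cF)
  have low: "\<mu> / 2 * (norm y)\<^sup>2 - (norm (gradF 0) + norm e) * norm y - (- F 0) \<le> F y + y \<bullet> e" for y
  proof -
    have 1: "F 0 + gradF 0 \<bullet> (y - 0) + \<mu> / 2 * (norm (y - 0))\<^sup>2 \<le> F y" by (rule first_order[OF sc der])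
    have 2: "- (norm (gradF 0) * norm y) \<le> gradF 0 \<bullet> y" using Cauchy_Schwarz_ineq2[of "gradF 0" y] by linarith
    have 3: "- (norm y * norm e) \<le> y \<bullet> e" using Cauchy_Schwarz_ineq2[of y e] by linarith
    have 4: "(norm (gradF 0) + norm e) * norm y = norm (gradF 0) * norm y + norm y * norm e" by (simp add: algebra_simps)
    show ?thesis using 1 2 3 4 by simp
  qed
  have "\<exists>p. \<forall>u. ereal (F p + p \<bullet> e) + R p \<le> ereal (F u + u \<bullet> e) + R u"
    using exists_min[OF cont _ low pr cv ls] mu by simp
  from someI_ex[OF this] show ?thesis unfolding argmin_e_def by blast
qed

lemma xhat_VI:
  fixes F :: "'v::euclidean_space \<Rightarrow> real" and R :: "'v \<Rightarrow> ereal"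
  assumes der: "\<And>x. (F has_derivative (\<lambda>h. gradF x \<bullet> h)) (at x)" and sc: "strongly_convex \<mu> F"
    and pr: "proper_fun R" and cv: "convex_ereal_fun R"
    and min: "\<And>u. ereal (F p + p \<bullet> e) + R p \<le> ereal (F u + u \<bullet> e) + R u"
  shows "ereal (- ((gradF p + e) \<bullet> (y - p))) + R p \<le> R y"
proof (cases "R y = \<infinity>")
  case True then show ?thesis by simp
next
  case False
  then obtain ry where ry: "R y = ereal ry" using proper_finite[OF pr] by blast
  have "R p \<noteq> \<infinity>" using growth(1)[OF sc_lin[OF sc] pr cv min] .
  then obtain rp where rp: "R p = ereal rp" using proper_finite[OF pr] by blast
  define d where "d = y - p"
  have f1: "((\<lambda>t. (F (p + t *\<^sub>R d) - F p) / t + d \<bullet> e + ry - rp) \<longlongrightarrow> gradF p \<bullet> d + d \<bullet> e + ry - rp) (at_right 0)"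
    by (intro tendsto_intros dir_deriv[OF der])
  have ev: "\<forall>\<^sub>F t in at_right 0. 0 \<le> (F (p + t *\<^sub>R d) - F p) / t + d \<bullet> e + ry - rp"
    using eventually_at_right_real[of 0 1, OF zero_less_one]
  proof (rule eventually_mono)
    fix t :: real assume t: "t \<in> {0<..<1}"
    define z where "z = p + t *\<^sub>R d"
    have z: "z = (1 - t) *\<^sub>R p + t *\<^sub>R y" by (simp add: z_def d_def algebra_simps)
    have "t \<in> {0..1}" using t by simp
    then have "R z \<le> ereal (1 - t) * R p + ereal t * R y" using cv unfolding convex_ereal_fun_def z by blast
    then have Rz: "R z \<le> ereal ((1 - t) * rp + t * ry)" by (simp add: rp ry)
    then have "R z \<noteq> \<infinity>" by auto
    then obtain rz where rz: "R z = ereal rz" using proper_finite[OF pr] by blast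
    have "F p + p \<bullet> e + rp \<le> F z + z \<bullet> e + rz" using min[of z] by (simp add: rp rz)
    moreover have "rz \<le> (1 - t) * rp + t * ry" using Rz rz by simp
    moreover have "z \<bullet> e = p \<bullet> e + t * (d \<bullet> e)" by (simp add: z_def inner_add_left)
    ultimately have "0 \<le> (F z - F p) + t * (d \<bullet> e + ry - rp)" by (simp add: algebra_simps)
    then have "0 \<le> ((F z - F p) + t * (d \<bullet> e + ry - rp)) / t" using t by simp
    also have "\<dots> = (F z - F p) / t + d \<bullet> e + ry - rp" using t by (simp add: field_simps)
    finally show "0 \<le> (F (p + t *\<^sub>R d) - F p) / t + d \<bullet> e + ry - rp" by (simp add: z_def)
  qed
  have "0 \<le> gradF p \<bullet> d + d \<bullet> e + ry - rp"
    by (rule tendsto_le[OF trivial_limit_at_right_real f1 tendsto_const ev])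
  moreover have "(gradF p + e) \<bullet> d = gradF p \<bullet> d + d \<bullet> e" by (simp add: inner_add_left inner_add_right inner_commute)
  ultimately have "- ((gradF p + e) \<bullet> d) + rp \<le> ry" by linarith
  then show ?thesis by (simp add: rp ry d_def)
qed

lemma xhat_lip:
  fixes F :: "'v::euclidean_space \<Rightarrow> real" and R :: "'v \<Rightarrow> ereal"
  assumes sc: "strongly_convex \<mu> F" and mu: "\<mu> > 0"
    and pr: "proper_fun R" and cv: "convex_ereal_fun R"
    and min1: "\<And>u. ereal (F p1 + p1 \<bullet> e1) + R p1 \<le> ereal (F u + u \<bullet> e1) + R u"
    and min2: "\<And>u. ereal (F p2 + p2 \<bullet> e2) + R p2 \<le> ereal (F u + u \<bullet> e2) + R u"
  shows "\<mu> * norm (p1 - p2) \<le> norm (e1 - e2)"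
proof -
  have "\<mu> * (norm (p1 - p2))\<^sup>2 \<le> ((F p2 + p2 \<bullet> e1) - (F p2 + p2 \<bullet> e2)) - ((F p1 + p1 \<bullet> e1) - (F p1 + p1 \<bullet> e2))"
    by (rule two_min[OF sc_lin[OF sc] sc_lin[OF sc] pr cv min1 min2])
  also have "\<dots> = (p2 - p1) \<bullet> (e1 - e2)" by (simp add: inner_diff_left inner_diff_right algebra_simps)
  also have "\<dots> \<le> norm (p2 - p1) * norm (e1 - e2)" by (rule norm_cauchy_schwarz)
  finally have "norm (p1 - p2) * (\<mu> * norm (p1 - p2)) \<le> norm (p1 - p2) * norm (e1 - e2)"
    by (simp add: power2_eq_square norm_minus_commute algebra_simps)
  then show ?thesis
    by (cases "norm (p1 - p2) = 0") (simp_all add: mult_le_cancel_left_pos mu)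
qed




lemma real_le_1_sq: "(n::real) \<le> 1 + n\<^sup>2"
proof -
  have "0 \<le> (n - 1/2)\<^sup>2" by simp
  then show ?thesis by (simp add: power2_eq_square algebra_simps)
qed

lemma DB:
  fixes P0 :: "'z measure" and gf :: "'v::euclidean_space \<Rightarrow> 'z \<Rightarrow> 'v" and gradF :: "'v \<Rightarrow> 'v"
  assumes P0: "prob_space P0"
    and gf_lip: "\<And>x y z. z \<in> space P0 \<Longrightarrow> norm (gf x z - gf y z) \<le> L * norm (x - y)"
    and gf_meas: "\<And>x. gf x \<in> borel_measurable P0"
    and gf_sq: "\<And>x. integrable P0 (\<lambda>z. (norm (gf x z))\<^sup>2)"
    and gf_unb: "\<And>x. (\<integral>z. gf x z \<partial>P0) = gradF x"
    and F_smooth: "\<And>x y. norm (gradF x - gradF y) \<le> L * norm (x - y)"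
    and mono: "\<And>a b. \<mu> * (norm (a - b))\<^sup>2 \<le> (a - b) \<bullet> (gradF a - gradF b)"
    and lam: "lam > 0" and L: "L \<ge> 0" and small: "2 * lam * L\<^sup>2 \<le> \<mu>"
  shows "(\<integral>\<^sup>+z. ennreal ((norm ((a - b) - lam *\<^sub>R (gf a z - gf c z + gradF c - gradF b)))\<^sup>2) \<partial>P0)
          \<le> ennreal ((1 - lam * \<mu>) * (norm (a - b))\<^sup>2 + 8 * lam\<^sup>2 * L\<^sup>2 * (norm (c - b))\<^sup>2)"
proof -
  interpret P: prob_space P0 by fact
  have gint: "integrable P0 (gf x)" for x
  proof (rule Bochner_Integration.integrable_bound[OF _ gf_meas])
    show "integrable P0 (\<lambda>z. 1 + (norm (gf x z))\<^sup>2)" using gf_sq[of x] by simp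
    show "AE z in P0. norm (gf x z) \<le> norm (1 + (norm (gf x z))\<^sup>2)"
      using real_le_1_sq by (auto intro!: AE_I2)
  qed
  define u where "u = a - b"
  define W where "W z = gf a z - gf c z + (gradF c - gradF b)" for z
  define Bd where "Bd = L\<^sup>2 * (2 * (norm u)\<^sup>2 + 8 * (norm (c - b))\<^sup>2)"
  have Wb: "(norm (W z))\<^sup>2 \<le> Bd" if z: "z \<in> space P0" for z
  proof -
    have "norm (W z) \<le> norm (gf a z - gf c z) + norm (gradF c - gradF b)"
      unfolding W_def by (rule norm_triangle_ineq)
    also have "\<dots> \<le> L * norm (a - c) + L * norm (c - b)"
      using gf_lip[OF z, of a c] F_smooth[of c b] by simp
    finally have t1: "norm (W z) \<le> L * norm (a - c) + L * norm (c - b)" .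
    have t2: "norm (a - c) \<le> norm u + norm (c - b)"
    proof -
      have "a - c = u - (c - b)" by (simp add: u_def)
      then show ?thesis by (metis norm_triangle_ineq4)
    qed
    have t3: "L * norm (a - c) \<le> L * (norm u + norm (c - b))" using mult_left_mono[OF t2 L] .
    have nW: "norm (W z) \<le> L * (norm u + 2 * norm (c - b))" using t1 t3 by (simp add: algebra_simps)
    have "(norm (W z))\<^sup>2 \<le> (L * (norm u + 2 * norm (c - b)))\<^sup>2"
      by (rule power_mono[OF nW]) simp
    also have "\<dots> = L\<^sup>2 * (norm u + 2 * norm (c - b))\<^sup>2" by (simp add: power_mult_distrib)
    also have "\<dots> \<le> Bd" unfolding Bd_def
    proof (rule mult_left_mono)
      have "0 \<le> (norm u - 2 * norm (c - b))\<^sup>2" by simp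
      then show "(norm u + 2 * norm (c - b))\<^sup>2 \<le> 2 * (norm u)\<^sup>2 + 8 * (norm (c - b))\<^sup>2"
        by (simp add: power2_eq_square algebra_simps)
    qed simp
    finally show ?thesis .
  qed
  have expand: "(norm (u - lam *\<^sub>R W z))\<^sup>2 = (norm u)\<^sup>2 - 2 * lam * (u \<bullet> W z) + lam\<^sup>2 * (norm (W z))\<^sup>2" for z
    unfolding power2_norm_eq_inner
    by (simp add: inner_diff_left inner_diff_right inner_commute power2_eq_square algebra_simps)
  define h2 where "h2 z = ((norm u)\<^sup>2 + lam\<^sup>2 * Bd) + (-2 * lam) * (u \<bullet> W z)" for z
  have Hle: "(norm (u - lam *\<^sub>R W z))\<^sup>2 \<le> h2 z" if z: "z \<in> space P0" for z
  proof -
    have "lam\<^sup>2 * (norm (W z))\<^sup>2 \<le> lam\<^sup>2 * Bd" using Wb[OF z] by (intro mult_left_mono) simp_all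
    then show ?thesis unfolding expand h2_def by simp
  qed
  have Wint: "integrable P0 W" unfolding W_def using gint by (intro Bochner_Integration.integrable_add Bochner_Integration.integrable_diff) auto
  have intW: "(\<integral>z. W z \<partial>P0) = gradF a - gradF b"
    unfolding W_def using gint gf_unb P.prob_space by simp
  have h2int: "integrable P0 h2" unfolding h2_def using Wint by (intro Bochner_Integration.integrable_add Bochner_Integration.integrable_mult_right) auto
  have ih2: "(\<integral>z. h2 z \<partial>P0) = (norm u)\<^sup>2 + lam\<^sup>2 * Bd - 2 * lam * (u \<bullet> (gradF a - gradF b))"
    unfolding h2_def using Wint intW P.prob_space by simp
  have "(\<integral>\<^sup>+z. ennreal ((norm ((a - b) - lam *\<^sub>R (gf a z - gf c z + gradF c - gradF b)))\<^sup>2) \<partial>P0)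
       = (\<integral>\<^sup>+z. ennreal ((norm (u - lam *\<^sub>R W z))\<^sup>2) \<partial>P0)"
    by (simp add: u_def W_def algebra_simps)
  also have "\<dots> \<le> (\<integral>\<^sup>+z. ennreal (h2 z) \<partial>P0)"
    by (rule nn_integral_mono) (rule ennreal_leI[OF Hle])
  also have "\<dots> = ennreal (\<integral>z. h2 z \<partial>P0)"
  proof (rule nn_integral_eq_integral[OF h2int])
    show "AE z in P0. 0 \<le> h2 z" using Hle by (auto intro!: AE_I2 order_trans[OF zero_le_power2])
  qed
  also have "\<dots> \<le> ennreal ((1 - lam * \<mu>) * (norm (a - b))\<^sup>2 + 8 * lam\<^sup>2 * L\<^sup>2 * (norm (c - b))\<^sup>2)"
  proof (rule ennreal_leI)
    have m: "\<mu> * (norm u)\<^sup>2 \<le> u \<bullet> (gradF a - gradF b)" using mono[of a b] by (simp add: u_def)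
    have "2 * lam * (\<mu> * (norm u)\<^sup>2) \<le> 2 * lam * (u \<bullet> (gradF a - gradF b))"
      using m lam by simp
    moreover have "lam\<^sup>2 * (L\<^sup>2 * (2 * (norm u)\<^sup>2)) \<le> lam * \<mu> * (norm u)\<^sup>2"
    proof -
      have "lam * (2 * lam * L\<^sup>2) \<le> lam * \<mu>" using small lam by simp
      then have "lam * (2 * lam * L\<^sup>2) * (norm u)\<^sup>2 \<le> lam * \<mu> * (norm u)\<^sup>2" by (simp add: mult_right_mono)
      then show ?thesis by (simp add: power2_eq_square algebra_simps)
    qed
    ultimately show "(\<integral>z. h2 z \<partial>P0) \<le> (1 - lam * \<mu>) * (norm (a - b))\<^sup>2 + 8 * lam\<^sup>2 * L\<^sup>2 * (norm (c - b))\<^sup>2"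
      unfolding ih2 Bd_def u_def[symmetric] by (simp add: algebra_simps)
  qed
  finally show ?thesis .
qed



lemma caratheodory_meas:
  fixes g :: "'v::euclidean_space \<Rightarrow> 'z \<Rightarrow> 'w::euclidean_space"
  assumes cont: "\<And>z. z \<in> space P \<Longrightarrow> continuous_on UNIV (\<lambda>x. g x z)"
    and gm: "\<And>x. g x \<in> borel_measurable P"
    and X: "X \<in> borel_measurable N" and Y: "Y \<in> N \<rightarrow>\<^sub>M P"
  shows "(\<lambda>\<omega>. g (X \<omega>) (Y \<omega>)) \<in> borel_measurable N"
proof -
  obtain D :: "'v set" where D: "countable D" "\<And>U. open U \<Longrightarrow> U \<noteq> {} \<Longrightarrow> \<exists>d\<in>D. d \<in> U"
    by (erule countable_dense_setE)
  have Dne: "D \<noteq> {}" using D(2)[of UNIV] by auto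
  define ee where "ee = from_nat_into D"
  have eeD: "range ee = D" unfolding ee_def using D(1) Dne by (simp add: range_from_nat_into)
  have ex: "\<exists>i. dist (ee i) x < r" if "r > 0" for x r
  proof -
    have "ball x r \<noteq> {}" using that by (metis centre_in_ball empty_iff)
    then obtain d where "d \<in> D" "d \<in> ball x r" using D(2)[of "ball x r"] by blast
    then show ?thesis using eeD by (metis dist_commute imageE mem_ball)
  qed
  define idx where "idx k \<omega> = (LEAST i. dist (ee i) (X \<omega>) < 1 / Suc k)" for k \<omega>
  have idx_prop: "dist (ee (idx k \<omega>)) (X \<omega>) < 1 / Suc k" for k \<omega>
    unfolding idx_def by (rule LeastI_ex) (rule ex, simp)
  have idx_meas: "idx k \<in> N \<rightarrow>\<^sub>M count_space UNIV" for k
    unfolding idx_def using X by measurable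
  have gi: "(\<lambda>\<omega>. g (ee i) (Y \<omega>)) \<in> borel_measurable N" for i
    using measurable_compose[OF Y gm] .
  have ak: "(\<lambda>\<omega>. g (ee (idx k \<omega>)) (Y \<omega>)) \<in> borel_measurable N" for k
    by (rule measurable_compose_countable[where f="\<lambda>i \<omega>. g (ee i) (Y \<omega>)", OF gi idx_meas])
  show ?thesis
  proof (rule borel_measurable_LIMSEQ_metric[OF ak])
    fix \<omega> assume \<omega>: "\<omega> \<in> space N"
    have conv: "(\<lambda>k. ee (idx k \<omega>)) \<longlonglongrightarrow> X \<omega>"
    proof (rule metric_LIMSEQ_I)
      fix r :: real assume "0 < r"
      then obtain n0 :: nat where n0: "1 / Suc n0 < r"
        using reals_Archimedean[of r] by (auto simp: inverse_eq_divide)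
      show "\<exists>no. \<forall>n\<ge>no. dist (ee (idx n \<omega>)) (X \<omega>) < r"
      proof (intro exI allI impI)
        fix n assume "n0 \<le> n"
        then have "1 / real (Suc n) \<le> 1 / Suc n0" by (simp add: frac_le)
        then show "dist (ee (idx n \<omega>)) (X \<omega>) < r" using idx_prop[of n \<omega>] n0 by linarith
      qed
    qed
    have "Y \<omega> \<in> space P" using measurable_space[OF Y \<omega>] .
    then have "isCont (\<lambda>x. g x (Y \<omega>)) (X \<omega>)"
      using cont continuous_on_eq_continuous_at open_UNIV by blast
    then show "(\<lambda>k. g (ee (idx k \<omega>)) (Y \<omega>)) \<longlonglongrightarrow> g (X \<omega>) (Y \<omega>)"
      using conv isCont_tendsto_compose by blast
  qed
qed

lemma seqspace: "prob_space P0 \<Longrightarrow> sequence_space P0"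
  unfolding sequence_space_def product_prob_space_def product_prob_space_axioms_def product_sigma_finite_def
  by (auto intro: prob_space_imp_sigma_finite)

lemma indep_coord:
  fixes P0 :: "'z measure" and \<phi> :: "(nat \<Rightarrow> 'z) \<Rightarrow> 'z \<Rightarrow> ennreal"
  assumes P0: "prob_space P0"
    and dep: "\<And>\<omega> \<omega>' z. (\<And>i. i < n \<Longrightarrow> \<omega> i = \<omega>' i) \<Longrightarrow> \<phi> \<omega> z = \<phi> \<omega>' z"
    and meas: "(\<lambda>p. \<phi> (fst p) (snd p)) \<in> borel_measurable (PiM UNIV (\<lambda>_::nat. P0) \<Otimes>\<^sub>M P0)"
  shows "(\<integral>\<^sup>+\<omega>. \<phi> \<omega> (\<omega> n) \<partial>PiM UNIV (\<lambda>_::nat. P0))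
       = (\<integral>\<^sup>+\<omega>. (\<integral>\<^sup>+z. \<phi> \<omega> z \<partial>P0) \<partial>PiM UNIV (\<lambda>_::nat. P0))"
proof -
  interpret S: sequence_space P0 using seqspace[OF P0] .
  let ?S = "PiM UNIV (\<lambda>_::nat. P0)"
  interpret SS: pair_sigma_finite ?S ?S
    by (simp add: S.P.sigma_finite_measure_axioms pair_sigma_finite_def)
  have m1: "(\<lambda>\<omega>. (\<omega>, \<omega> n)) \<in> ?S \<rightarrow>\<^sub>M ?S \<Otimes>\<^sub>M P0" by measurable
  have mphi: "(\<lambda>\<omega>. \<phi> \<omega> (\<omega> n)) \<in> borel_measurable ?S"
    using measurable_compose[OF m1 meas] by simp
  have m2: "(\<lambda>p. (fst p, snd p 0)) \<in> ?S \<Otimes>\<^sub>M ?S \<rightarrow>\<^sub>M ?S \<Otimes>\<^sub>M P0" by measurable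
  have mphi2: "(\<lambda>p. \<phi> (fst p) (snd p 0)) \<in> borel_measurable (?S \<Otimes>\<^sub>M ?S)"
    using measurable_compose[OF m2 meas] by simp
  have "(\<integral>\<^sup>+\<omega>. \<phi> \<omega> (\<omega> n) \<partial>?S) = (\<integral>\<^sup>+\<omega>. \<phi> \<omega> (\<omega> n) \<partial>distr (?S \<Otimes>\<^sub>M ?S) ?S (\<lambda>(\<omega>, \<omega>'). comb_seq n \<omega> \<omega>'))"
    by (simp add: S.PiM_comb_seq)
  also have "\<dots> = (\<integral>\<^sup>+p. \<phi> (comb_seq n (fst p) (snd p)) (comb_seq n (fst p) (snd p) n) \<partial>(?S \<Otimes>\<^sub>M ?S))"
    by (subst nn_integral_distr) (auto simp: case_prod_beta intro: measurable_comb_seq[unfolded case_prod_beta] mphi)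
  also have "\<dots> = (\<integral>\<^sup>+p. \<phi> (fst p) (snd p 0) \<partial>(?S \<Otimes>\<^sub>M ?S))"
  proof (rule nn_integral_cong)
    fix p :: "(nat \<Rightarrow> 'z) \<times> (nat \<Rightarrow> 'z)"
    have "comb_seq n (fst p) (snd p) n = snd p 0" using comb_seq_add[of n _ _ 0] by simp
    moreover have "\<phi> (comb_seq n (fst p) (snd p)) z = \<phi> (fst p) z" for z
      by (rule dep) (simp add: comb_seq_less)
    ultimately show "\<phi> (comb_seq n (fst p) (snd p)) (comb_seq n (fst p) (snd p) n) = \<phi> (fst p) (snd p 0)" by simp
  qed
  also have "\<dots> = (\<integral>\<^sup>+\<omega>. (\<integral>\<^sup>+\<omega>'. \<phi> \<omega> (\<omega>' 0) \<partial>?S) \<partial>?S)"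
    using S.P.nn_integral_fst[OF mphi2] by simp
  also have "\<dots> = (\<integral>\<^sup>+\<omega>. (\<integral>\<^sup>+z. \<phi> \<omega> z \<partial>P0) \<partial>?S)"
  proof (rule nn_integral_cong)
    fix \<omega> assume \<omega>: "\<omega> \<in> space ?S"
    have mz: "(\<lambda>z. \<phi> \<omega> z) \<in> borel_measurable P0"
      using measurable_compose[OF _ meas, of "\<lambda>z. (\<omega>, z)"] \<omega> by simp
    have "(\<integral>\<^sup>+z. \<phi> \<omega> z \<partial>P0) = (\<integral>\<^sup>+z. \<phi> \<omega> z \<partial>distr ?S P0 (\<lambda>\<omega>'. \<omega>' 0))"
      using S.PiM_component[of 0] by simp
    also have "\<dots> = (\<integral>\<^sup>+\<omega>'. \<phi> \<omega> (\<omega>' 0) \<partial>?S)"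
      by (subst nn_integral_distr) (auto intro: mz)
    finally show "(\<integral>\<^sup>+\<omega>'. \<phi> \<omega> (\<omega>' 0) \<partial>?S) = (\<integral>\<^sup>+z. \<phi> \<omega> z \<partial>P0)" by simp
  qed
  finally show ?thesis .
qed

lemma lip_cont:
  fixes f :: "'a::metric_space \<Rightarrow> 'b::metric_space"
  assumes "\<And>x y. dist (f x) (f y) \<le> C * dist x y"
  shows "continuous_on UNIV f"
  unfolding continuous_on_iff
proof (intro ballI allI impI)
  fix x :: 'a and e :: real assume e: "0 < e"
  show "\<exists>d>0. \<forall>x'\<in>UNIV. dist x' x < d \<longrightarrow> dist (f x') (f x) < e"
  proof (intro exI[of _ "e / (\<bar>C\<bar> + 1)"] conjI ballI impI)
    show "0 < e / (\<bar>C\<bar> + 1)" using e by simp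
    fix x' assume "dist x' x < e / (\<bar>C\<bar> + 1)"
    then have "(\<bar>C\<bar> + 1) * dist x' x < e" by (simp add: field_simps)
    moreover have "dist (f x') (f x) \<le> C * dist x' x" by (rule assms)
    moreover have "C * dist x' x \<le> (\<bar>C\<bar> + 1) * dist x' x" by (intro mult_right_mono) auto
    ultimately show "dist (f x') (f x) < e" by linarith
  qed
qed

context
  fixes P0 :: "'z measure" and gf :: "'v::euclidean_space \<Rightarrow> 'z \<Rightarrow> 'v"
  assumes gf_cont: "\<And>z. z \<in> space P0 \<Longrightarrow> continuous_on UNIV (\<lambda>x. gf x z)"
    and gf_meas: "\<And>x. gf x \<in> borel_measurable P0"
begin

lemma meas_gfY:
  assumes "X \<in> borel_measurable (PiM UNIV (\<lambda>_::nat. P0))"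
  shows "(\<lambda>\<omega>. gf (X \<omega>) (\<omega> n)) \<in> borel_measurable (PiM UNIV (\<lambda>_::nat. P0))"
  by (rule caratheodory_meas[OF gf_cont gf_meas assms measurable_component_singleton]) simp_all

lemma meas_gbar:
  assumes "X \<in> borel_measurable (PiM UNIV (\<lambda>_::nat. P0))"
  shows "(\<lambda>\<omega>. vrpg_gbar gf T K m \<omega> (X \<omega>)) \<in> borel_measurable (PiM UNIV (\<lambda>_::nat. P0))"
  unfolding vrpg_gbar_def
  by (intro borel_measurable_scaleR borel_measurable_const borel_measurable_sum meas_gfY assms)

lemma meas_G:
  assumes "X \<in> borel_measurable (PiM UNIV (\<lambda>_::nat. P0))" "Xb \<in> borel_measurable (PiM UNIV (\<lambda>_::nat. P0))"
  shows "(\<lambda>\<omega>. vrpg_G gf T K m k \<omega> (Xb \<omega>) (X \<omega>)) \<in> borel_measurable (PiM UNIV (\<lambda>_::nat. P0))"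
  unfolding vrpg_G_def
  by (intro borel_measurable_add borel_measurable_diff meas_gfY meas_gbar assms)

lemma meas_inner:
  assumes cp: "continuous_on UNIV (prox lam R)"
    and Xb: "Xb \<in> borel_measurable (PiM UNIV (\<lambda>_::nat. P0))"
  shows "(\<lambda>\<omega>. vrpg_inner gf R lam T K m \<omega> (Xb \<omega>) k) \<in> borel_measurable (PiM UNIV (\<lambda>_::nat. P0))"
proof (induction k)
  case 0 then show ?case using Xb by simp
next
  case (Suc k)
  show ?case
    unfolding vrpg_inner.simps Let_def
    by (intro borel_measurable_continuous_on[OF cp] borel_measurable_diff borel_measurable_scaleR
        borel_measurable_const meas_G Suc Xb)
qed

lemma meas_xbar:
  assumes cp: "continuous_on UNIV (prox lam R)"
  shows "(\<lambda>\<omega>. vrpg_xbar gf R lam T K x1 \<omega> m) \<in> borel_measurable (PiM UNIV (\<lambda>_::nat. P0))"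
proof (induction m)
  case 0 then show ?case by simp
next
  case (Suc m)
  show ?case
  proof (cases "m = 0")
    case True then show ?thesis by simp
  next
    case False then show ?thesis using meas_inner[OF cp Suc] by simp
  qed
qed

end

lemma dep_gbar:
  assumes "\<And>i. i < vrpg_j T K m + T + 1 \<Longrightarrow> \<omega> i = \<omega>' i"
  shows "vrpg_gbar gf T K m \<omega> x = vrpg_gbar gf T K m \<omega>' x"
  unfolding vrpg_gbar_def using assms by (intro arg_cong[where f="\<lambda>s. _ *\<^sub>R s"] sum.cong) auto

lemma dep_inner:
  assumes "\<And>i. i < vrpg_j T K m + T + k + 1 \<Longrightarrow> \<omega> i = \<omega>' i"
  shows "vrpg_inner gf R lam T K m \<omega> xb k = vrpg_inner gf R lam T K m \<omega>' xb k"
  using assms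
proof (induction k)
  case 0 then show ?case by simp
next
  case (Suc k)
  have ih: "vrpg_inner gf R lam T K m \<omega> xb k = vrpg_inner gf R lam T K m \<omega>' xb k"
    using Suc.prems by (intro Suc.IH) simp
  have gb: "vrpg_gbar gf T K m \<omega> xb = vrpg_gbar gf T K m \<omega>' xb"
    using Suc.prems by (intro dep_gbar) simp
  have w: "\<omega> (vrpg_j T K m + T + Suc k) = \<omega>' (vrpg_j T K m + T + Suc k)"
    using Suc.prems by simp
  show ?case using w by (simp add: Let_def ih vrpg_G_def gb)
qed

lemma vrpg_j_Suc: "1 \<le> m \<Longrightarrow> vrpg_j T K (Suc m) = vrpg_j T K m + T + K"
  unfolding vrpg_j_def by (cases m) (simp_all add: algebra_simps)

lemma dep_xbar:
  assumes "\<And>i. i < vrpg_j T K m + 1 \<Longrightarrow> \<omega> i = \<omega>' i"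
  shows "vrpg_xbar gf R lam T K x1 \<omega> m = vrpg_xbar gf R lam T K x1 \<omega>' m"
  using assms
proof (induction m)
  case 0 then show ?case by simp
next
  case (Suc m)
  show ?case
  proof (cases "m = 0")
    case True then show ?thesis by simp
  next
    case False
    then have m1: "1 \<le> m" by simp
    have jj: "vrpg_j T K (Suc m) = vrpg_j T K m + T + K" by (rule vrpg_j_Suc[OF m1])
    have ih: "vrpg_xbar gf R lam T K x1 \<omega> m = vrpg_xbar gf R lam T K x1 \<omega>' m"
      using Suc.prems jj by (intro Suc.IH) simp
    have "vrpg_inner gf R lam T K m \<omega> (vrpg_xbar gf R lam T K x1 \<omega>' m) K
        = vrpg_inner gf R lam T K m \<omega>' (vrpg_xbar gf R lam T K x1 \<omega>' m) K"
      using Suc.prems jj by (intro dep_inner) simp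
    then show ?thesis using False ih by simp
  qed
qed




theorem lemma1:
  fixes P0 :: "'z measure"
    and f :: "'v::euclidean_space \<Rightarrow> 'z \<Rightarrow> real"
    and gf :: "'v \<Rightarrow> 'z \<Rightarrow> 'v"
    and F :: "'v \<Rightarrow> real" and gradF :: "'v \<Rightarrow> 'v"
    and R :: "'v \<Rightarrow> ereal"
    and \<mu> L lam :: real and M K T :: nat and x1 :: 'v and m :: nat
  assumes P0: "prob_space P0"
    and f_meas: "\<And>x. f x \<in> borel_measurable P0"
    and f_int: "\<And>x. integrable P0 (f x)"
    and F_def: "\<And>x. F x = (\<integral>z. f x z \<partial>P0)"
    and mu_pos: "0 < \<mu>" and mu_L: "\<mu> \<le> L"
    and F_deriv: "\<And>x. (F has_derivative (\<lambda>h. gradF x \<bullet> h)) (at x)"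
    and F_sc: "strongly_convex \<mu> F"
    and F_smooth: "\<And>x y. norm (gradF x - gradF y) \<le> L * norm (x - y)"
    and R_proper: "proper_fun R" and R_convex: "convex_ereal_fun R" and R_lsc: "lsc_fun R"
    and f_deriv: "\<And>x z. z \<in> space P0 \<Longrightarrow> ((\<lambda>y. f y z) has_derivative (\<lambda>h. gf x z \<bullet> h)) (at x)"
    and gf_cont: "\<And>z. z \<in> space P0 \<Longrightarrow> continuous_on UNIV (\<lambda>x. gf x z)"
    and gf_lip: "\<And>x y z. z \<in> space P0 \<Longrightarrow> norm (gf x z - gf y z) \<le> L * norm (x - y)"
    and gf_meas: "\<And>x. gf x \<in> borel_measurable P0"
    and gf_sq: "\<And>x. integrable P0 (\<lambda>z. (norm (gf x z))\<^sup>2)"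
    and gf_unbiased: "\<And>x. (\<integral>z. gf x z \<partial>P0) = gradF x"
    and lam_def: "lam = \<mu> / (6 * 8\<^sup>2 * L\<^sup>2)"
    and K_def: "real K = ln 120 / ln (1 / (1 - \<mu>\<^sup>2 / (6 * 8\<^sup>2 * L\<^sup>2)))"
    and K_pos: "0 < K" and T_pos: "0 < T"
    and m: "1 \<le> m" "m \<le> M"
  shows
    "(\<integral>\<^sup>+\<omega>. ennreal ((norm (vrpg_xbar gf R lam T K x1 \<omega> (Suc m)
          - argmin_e (\<lambda>x. ereal (F x + x \<bullet> (vrpg_gbar gf T K m \<omega> (vrpg_xbar gf R lam T K x1 \<omega> m)
                                          - gradF (vrpg_xbar gf R lam T K x1 \<omega> m))) + R x)))\<^sup>2)
        \<partial>(PiM UNIV (\<lambda>_::nat. P0)))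
     \<le> (\<integral>\<^sup>+\<omega>. ennreal ((norm (vrpg_xbar gf R lam T K x1 \<omega> m
          - argmin_e (\<lambda>x. ereal (F x + x \<bullet> (vrpg_gbar gf T K m \<omega> (vrpg_xbar gf R lam T K x1 \<omega> m)
                                          - gradF (vrpg_xbar gf R lam T K x1 \<omega> m))) + R x)))\<^sup>2)
        \<partial>(PiM UNIV (\<lambda>_::nat. P0))) / 20"
proof -
  have Lpos: "L > 0" using mu_pos mu_L by simp
  have lam_pos: "lam > 0" using lam_def mu_pos Lpos by simp
  have lamL: "lam * L\<^sup>2 = \<mu> / 384" using Lpos by (simp add: lam_def)
  have lammu: "lam * \<mu> = \<mu>\<^sup>2 / (6 * 8\<^sup>2 * L\<^sup>2)" by (simp add: lam_def power2_eq_square)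
  define q where "q = 1 - lam * \<mu>"
  define C where "C = 8 * lam\<^sup>2 * L\<^sup>2"
  have q_pos: "0 < q" and q_lt1: "q < 1"
  proof -
    have "\<mu>\<^sup>2 \<le> L\<^sup>2" using mu_pos mu_L by (simp add: power_mono)
    then have "\<mu>\<^sup>2 / (6 * 8\<^sup>2 * L\<^sup>2) \<le> 1 / 384" using Lpos by (simp add: field_simps)
    then show "0 < q" unfolding q_def lammu by simp
    show "q < 1" unfolding q_def using lam_pos mu_pos by simp
  qed
  have C_nonneg: "0 \<le> C" by (simp add: C_def)
  define A where "A e = argmin_e (\<lambda>x. ereal (F x + x \<bullet> e) + R x)" for e
  have Amin: "ereal (F (A e) + A e \<bullet> e) + R (A e) \<le> ereal (F u + u \<bullet> e) + R u" for e u
    unfolding A_def by (rule xhat_min[OF F_deriv F_sc mu_pos R_proper R_convex R_lsc])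
  have Afix: "prox lam R (A e - lam *\<^sub>R (gradF (A e) + e)) = A e" for e
    by (rule prox_fixed[OF lam_pos R_proper R_convex R_lsc xhat_VI[OF F_deriv F_sc R_proper R_convex Amin]])
  have Acont: "continuous_on UNIV A"
  proof (rule lip_cont[where C="1/\<mu>"])
    fix x y :: 'v
    have "\<mu> * norm (A x - A y) \<le> norm (x - y)"
      by (rule xhat_lip[OF F_sc mu_pos R_proper R_convex Amin Amin])
    then show "dist (A x) (A y) \<le> 1 / \<mu> * dist x y" using mu_pos by (simp add: dist_norm field_simps)
  qed
  have pcont: "continuous_on UNIV (prox lam R)"
    by (rule lip_cont[where C=1]) (simp add: dist_norm prox_nonexp[OF lam_pos R_proper R_convex R_lsc])
  have gcont: "continuous_on UNIV gradF"
    by (rule lip_cont[where C=L]) (simp add: dist_norm F_smooth)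
  interpret S: sequence_space P0 using seqspace[OF P0] .
  define xb where "xb \<omega> = vrpg_xbar gf R lam T K x1 \<omega> m" for \<omega>
  define e where "e \<omega> = vrpg_gbar gf T K m \<omega> (xb \<omega>) - gradF (xb \<omega>)" for \<omega>
  define xh where "xh \<omega> = A (e \<omega>)" for \<omega>
  define xk where "xk k \<omega> = vrpg_inner gf R lam T K m \<omega> (xb \<omega>) k" for k \<omega>
  define d where "d k = (\<integral>\<^sup>+\<omega>. ennreal ((norm (xk k \<omega> - xh \<omega>))\<^sup>2) \<partial>PiM UNIV (\<lambda>_::nat. P0))" for k
  have xb_m: "xb \<in> borel_measurable (PiM UNIV (\<lambda>_::nat. P0))"
    unfolding xb_def by (rule meas_xbar[OF gf_cont gf_meas pcont])
  have e_m: "e \<in> borel_measurable (PiM UNIV (\<lambda>_::nat. P0))"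
    unfolding e_def by (intro borel_measurable_diff meas_gbar[OF gf_cont gf_meas] xb_m borel_measurable_continuous_on[OF gcont])
  have xh_m: "xh \<in> borel_measurable (PiM UNIV (\<lambda>_::nat. P0))"
    unfolding xh_def by (rule borel_measurable_continuous_on[OF Acont e_m])
  have xk_m: "xk k \<in> borel_measurable (PiM UNIV (\<lambda>_::nat. P0))" for k
    unfolding xk_def by (rule meas_inner[OF gf_cont gf_meas pcont xb_m])
  have step: "d (Suc k) \<le> ennreal q * d k + ennreal C * d 0" for k
  proof -
    define n where "n = vrpg_j T K m + T + Suc k"
    define H where "H a b c z = (norm ((a - b) - lam *\<^sub>R (gf a z - gf c z + gradF c - gradF b)))\<^sup>2" for a b c z
    have pw: "(norm (xk (Suc k) \<omega> - xh \<omega>))\<^sup>2 \<le> H (xk k \<omega>) (xh \<omega>) (xb \<omega>) (\<omega> n)" for \<omega>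
    proof -
      let ?G = "vrpg_G gf T K m (Suc k) \<omega> (xb \<omega>) (xk k \<omega>)"
      have e1: "prox lam R (xk k \<omega> - lam *\<^sub>R ?G) = xk (Suc k) \<omega>" by (simp add: xk_def Let_def)
      have e2: "prox lam R (xh \<omega> - lam *\<^sub>R (gradF (xh \<omega>) + e \<omega>)) = xh \<omega>" using Afix[of "e \<omega>"] by (simp add: xh_def)
      have "norm (prox lam R (xk k \<omega> - lam *\<^sub>R ?G) - prox lam R (xh \<omega> - lam *\<^sub>R (gradF (xh \<omega>) + e \<omega>)))
          \<le> norm ((xk k \<omega> - lam *\<^sub>R ?G) - (xh \<omega> - lam *\<^sub>R (gradF (xh \<omega>) + e \<omega>)))"
        by (rule prox_nonexp[OF lam_pos R_proper R_convex R_lsc])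
      also have "(xk k \<omega> - lam *\<^sub>R ?G) - (xh \<omega> - lam *\<^sub>R (gradF (xh \<omega>) + e \<omega>))
          = (xk k \<omega> - xh \<omega>) - lam *\<^sub>R (gf (xk k \<omega>) (\<omega> n) - gf (xb \<omega>) (\<omega> n) + gradF (xb \<omega>) - gradF (xh \<omega>))"
        by (simp add: vrpg_G_def e_def n_def algebra_simps)
      finally have "norm (xk (Suc k) \<omega> - xh \<omega>) \<le> norm ((xk k \<omega> - xh \<omega>) - lam *\<^sub>R (gf (xk k \<omega>) (\<omega> n) - gf (xb \<omega>) (\<omega> n) + gradF (xb \<omega>) - gradF (xh \<omega>)))"
        unfolding e1 e2 .
      then show ?thesis unfolding H_def by (intro power_mono) simp_all
    qed
    define \<phi> where "\<phi> \<omega> z = ennreal (H (xk k \<omega>) (xh \<omega>) (xb \<omega>) z)" for \<omega> z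
    have dep: "\<phi> \<omega> z = \<phi> \<omega>' z" if agree: "\<And>i. i < n \<Longrightarrow> \<omega> i = \<omega>' i" for \<omega> \<omega>' z
    proof -
      have b: "xb \<omega> = xb \<omega>'" unfolding xb_def by (rule dep_xbar) (simp add: agree n_def)
      have g: "vrpg_gbar gf T K m \<omega> x = vrpg_gbar gf T K m \<omega>' x" for x by (rule dep_gbar) (simp add: agree n_def)
      have h: "xh \<omega> = xh \<omega>'" by (simp add: xh_def e_def b g)
      have "vrpg_inner gf R lam T K m \<omega> (xb \<omega>') k = vrpg_inner gf R lam T K m \<omega>' (xb \<omega>') k"
        by (rule dep_inner) (simp add: agree n_def)
      then have x: "xk k \<omega> = xk k \<omega>'" by (simp add: xk_def b)
      show ?thesis by (simp add: \<phi>_def b h x)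
    qed
    let ?S = "PiM UNIV (\<lambda>_::nat. P0)"
    have m1: "(\<lambda>p. xk k (fst p)) \<in> borel_measurable (?S \<Otimes>\<^sub>M P0)" using measurable_compose[OF measurable_fst xk_m] .
    have m2: "(\<lambda>p. xh (fst p)) \<in> borel_measurable (?S \<Otimes>\<^sub>M P0)" using measurable_compose[OF measurable_fst xh_m] .
    have m3: "(\<lambda>p. xb (fst p)) \<in> borel_measurable (?S \<Otimes>\<^sub>M P0)" using measurable_compose[OF measurable_fst xb_m] .
    have m4: "(\<lambda>p. gf (xk k (fst p)) (snd p)) \<in> borel_measurable (?S \<Otimes>\<^sub>M P0)"
      by (rule caratheodory_meas[OF gf_cont gf_meas m1 measurable_snd])
    have m5: "(\<lambda>p. gf (xb (fst p)) (snd p)) \<in> borel_measurable (?S \<Otimes>\<^sub>M P0)"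
      by (rule caratheodory_meas[OF gf_cont gf_meas m3 measurable_snd])
    have m6: "(\<lambda>p. gradF (xb (fst p))) \<in> borel_measurable (?S \<Otimes>\<^sub>M P0)" by (rule borel_measurable_continuous_on[OF gcont m3])
    have m7: "(\<lambda>p. gradF (xh (fst p))) \<in> borel_measurable (?S \<Otimes>\<^sub>M P0)" by (rule borel_measurable_continuous_on[OF gcont m2])
    have meas: "(\<lambda>p. \<phi> (fst p) (snd p)) \<in> borel_measurable (?S \<Otimes>\<^sub>M P0)"
      unfolding \<phi>_def H_def using m1 m2 m3 m4 m5 m6 m7 by measurable
    have Lnn: "0 \<le> L" using Lpos by simp
    have small: "2 * lam * L\<^sup>2 \<le> \<mu>" using lamL mu_pos by simp
    have dmeas: "(\<lambda>\<omega>. ennreal ((norm (xk j \<omega> - xh \<omega>))\<^sup>2)) \<in> borel_measurable ?S" for j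
      using xk_m[of j] xh_m by measurable
    have "d (Suc k) \<le> (\<integral>\<^sup>+\<omega>. \<phi> \<omega> (\<omega> n) \<partial>?S)"
      unfolding d_def \<phi>_def by (rule nn_integral_mono) (rule ennreal_leI[OF pw])
    also have "\<dots> = (\<integral>\<^sup>+\<omega>. (\<integral>\<^sup>+z. \<phi> \<omega> z \<partial>P0) \<partial>?S)"
      by (rule indep_coord[OF P0 dep meas])
    also have "\<dots> \<le> (\<integral>\<^sup>+\<omega>. (ennreal q * ennreal ((norm (xk k \<omega> - xh \<omega>))\<^sup>2)
                     + ennreal C * ennreal ((norm (xk 0 \<omega> - xh \<omega>))\<^sup>2)) \<partial>?S)"
    proof (rule nn_integral_mono)
      fix \<omega>
      have "(\<integral>\<^sup>+z. \<phi> \<omega> z \<partial>P0) \<le> ennreal ((1 - lam * \<mu>) * (norm (xk k \<omega> - xh \<omega>))\<^sup>2 + 8 * lam\<^sup>2 * L\<^sup>2 * (norm (xb \<omega> - xh \<omega>))\<^sup>2)"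
        unfolding \<phi>_def H_def
        by (rule DB[OF P0 gf_lip gf_meas gf_sq gf_unbiased F_smooth strong_mono[OF F_sc F_deriv] lam_pos Lnn small])
      also have "\<dots> = ennreal q * ennreal ((norm (xk k \<omega> - xh \<omega>))\<^sup>2) + ennreal C * ennreal ((norm (xk 0 \<omega> - xh \<omega>))\<^sup>2)"
        using q_pos C_nonneg by (simp add: q_def C_def xk_def ennreal_plus ennreal_mult)
      finally show "(\<integral>\<^sup>+z. \<phi> \<omega> z \<partial>P0) \<le> ennreal q * ennreal ((norm (xk k \<omega> - xh \<omega>))\<^sup>2) + ennreal C * ennreal ((norm (xk 0 \<omega> - xh \<omega>))\<^sup>2)" .
    qed
    also have "\<dots> = ennreal q * d k + ennreal C * d 0"
      unfolding d_def using dmeas by (simp add: nn_integral_add nn_integral_cmult)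
    finally show ?thesis .
  qed
  have iter: "d k \<le> ennreal (q ^ k + C * (\<Sum>i<k. q ^ i)) * d 0" for k
  proof (induction k)
    case 0 then show ?case by simp
  next
    case (Suc k)
    define \<alpha> where "\<alpha> = q ^ k + C * (\<Sum>i<k. q ^ i)"
    have \<alpha>0: "0 \<le> \<alpha>" unfolding \<alpha>_def using q_pos C_nonneg by (intro add_nonneg_nonneg mult_nonneg_nonneg sum_nonneg) simp_all
    have "d (Suc k) \<le> ennreal q * d k + ennreal C * d 0" by (rule step)
    also have "\<dots> \<le> ennreal q * (ennreal \<alpha> * d 0) + ennreal C * d 0"
      using Suc.IH unfolding \<alpha>_def by (intro add_mono mult_left_mono) simp_all
    also have "\<dots> = ennreal (q * \<alpha> + C) * d 0"
    proof -
      have "ennreal (q * \<alpha> + C) = ennreal q * ennreal \<alpha> + ennreal C"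
        using q_pos \<alpha>0 C_nonneg by (simp add: ennreal_plus ennreal_mult)
      then show ?thesis by (simp add: distrib_right mult.assoc)
    qed
    also have "q * \<alpha> + C = q ^ Suc k + C * (\<Sum>i<Suc k. q ^ i)"
    proof -
      have "(\<Sum>i<Suc k. q ^ i) = 1 + q * (\<Sum>i<k. q ^ i)"
        by (simp add: sum.lessThan_Suc_shift sum_distrib_left del: sum.lessThan_Suc)
      then show ?thesis unfolding \<alpha>_def by (simp add: algebra_simps)
    qed
    finally show ?case .
  qed
  have qK: "q ^ K = 1 / 120"
  proof -
    have qq: "q = 1 - \<mu>\<^sup>2 / (6 * 8\<^sup>2 * L\<^sup>2)" unfolding q_def lammu ..
    have l1: "ln (1 / q) > 0" using q_pos q_lt1 by simp
    have "real K * ln (1 / q) = ln 120" using K_def l1 unfolding qq[symmetric] by simp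
    then have "real K * ln q = - ln 120" using q_pos by (simp add: ln_div)
    moreover have "q ^ K = exp (real K * ln q)" using q_pos by (simp add: exp_of_nat_mult)
    ultimately show ?thesis by (simp add: exp_minus inverse_eq_divide)
  qed
  have sumq: "C * (\<Sum>i<K. q ^ i) \<le> 1 / 48"
  proof -
    have "(\<Sum>i<K. q ^ i) = (1 - q ^ K) / (1 - q)" using q_lt1 by (simp add: sum_gp_strict)
    also have "\<dots> \<le> 1 / (1 - q)" using q_lt1 q_pos by (simp add: divide_right_mono)
    finally have "C * (\<Sum>i<K. q ^ i) \<le> C * (1 / (1 - q))" using C_nonneg by (rule mult_left_mono)
    also have "C * (1 / (1 - q)) = 1 / 48"
    proof -
      have "1 - q = lam * \<mu>" by (simp add: q_def)
      then have "C * (1 / (1 - q)) = C / (lam * \<mu>)" by simp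
      also have "\<dots> = 8 * (lam * L\<^sup>2) / \<mu>" using lam_pos mu_pos
        by (simp add: C_def power2_eq_square field_simps)
      finally have "C * (1 / (1 - q)) = 8 * (lam * L\<^sup>2) / \<mu>" .
      then show ?thesis using mu_pos by (simp add: lamL)
    qed
    finally show ?thesis .
  qed
  have "d K \<le> ennreal (q ^ K + C * (\<Sum>i<K. q ^ i)) * d 0" by (rule iter)
  also have "\<dots> \<le> ennreal (1 / 20) * d 0"
    using qK sumq by (intro mult_right_mono ennreal_leI) simp_all
  also have "\<dots> = d 0 / 20"
    by (simp add: divide_ennreal[symmetric] ennreal_times_divide mult.commute)
  finally have fin: "d K \<le> d 0 / 20" .
  have "vrpg_xbar gf R lam T K x1 \<omega> (Suc m) = xk K \<omega>" for \<omega>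
    using m(1) by (simp add: xk_def xb_def)
  then show ?thesis using fin by (simp add: d_def xk_def xh_def A_def e_def xb_def)
qed


end
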